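(* Let $\mathbb{F}$ be a field of characteristic not $2$, let $V=\mathrm{span}\{u,v\}$ with a symmetric bilinear form $B$ satisfying $B(u,u)=B(v,v)=1$, $B(u,v)=\delta$, and let $\mathfrak{S}(\delta)=\mathbb{F}\oplus V$ with product $(\alpha+x)(\beta+y)=(\alpha\beta+B(x,y))+(\alpha y+\beta x)$ and Frobenius form $(\alpha+x,\beta+y)=2\alpha\beta+2B(x,y)$. Suppose $\delta\neq\pm1$ and that $\mathbb{F}$ contains the roots $\zeta,\zeta^{-1}$ of $x^2-2\delta x+1$. Then: (a) $\mathfrak{S}(\delta)$ contains exactly two $1$-dimensional nilpotent subalgebras $\mathbb{F}s$ and $\mathbb{F}t$ (i.e. $s^2=0=t^2$), and both lie in $V$; (b) $s,1,t$ form a basis of $\mathfrak{S}(\delta)$; moreover, if $s$ and $t$ are scaled so that $(s,t)=\frac14$ (equivalently $B(s,t)=\frac18$), then the idempotents of $\mathfrak{S}(\delta)$ are exactly $0$, $1$, and the elements $\xi s+\frac12+\xi^{-1}t$ for $\xi\in\mathbb{F}\setminus\{0\}$.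
   Context: Here $1$ denotes the element $1+0$ of $\mathbb{F}\oplus V$, which is the identity of $\mathfrak{S}(\delta)$. *)

theory Defs
  imports Main
begin

text \<open>An element
  (al, a, b) stands for al*1 + a*u + b*v.  Since delta ~= +-1 the Gram matrix of B
  on {u,v} is nonsingular, so u, v are linearly independent and V = F^2.\<close>

type_synonym 'a salg = "'a \<times> 'a \<times> 'a"

definition Bf :: "'a::field \<Rightarrow> 'a \<times> 'a \<Rightarrow> 'a \<times> 'a \<Rightarrow> 'a" where
  "Bf \<delta> x y = (case x of (a, b) \<Rightarrow> case y of (c, d) \<Rightarrow>
      a * c + b * d + \<delta> * (a * d + b * c))"

definition smul :: "'a::field \<Rightarrow> 'a salg \<Rightarrow> 'a salg \<Rightarrow> 'a salg" where
  "smul \<delta> x y = (case x of (al, a, b) \<Rightarrow> case y of (be, c, d) \<Rightarrow>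
      (al * be + Bf \<delta> (a, b) (c, d), al * c + be * a, al * d + be * b))"

definition sone :: "'a::field salg" where "sone = (1, 0, 0)"

definition sscale :: "'a::field \<Rightarrow> 'a salg \<Rightarrow> 'a salg" where
  "sscale c x = (case x of (al, a, b) \<Rightarrow> (c * al, c * a, c * b))"

definition sadd :: "'a::field salg \<Rightarrow> 'a salg \<Rightarrow> 'a salg" where
  "sadd x y = (case x of (al, a, b) \<Rightarrow> case y of (be, c, d) \<Rightarrow> (al + be, a + c, b + d))"

definition frob :: "'a::field \<Rightarrow> 'a salg \<Rightarrow> 'a salg \<Rightarrow> 'a" where
  "frob \<delta> x y = (case x of (al, a, b) \<Rightarrow> case y of (be, c, d) \<Rightarrow>
      2 * al * be + 2 * Bf \<delta> (a, b) (c, d))"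

definition Vsp :: "'a::field salg set" where "Vsp = {x. fst x = 0}"

definition line :: "'a::field salg \<Rightarrow> 'a salg set" where
  "line s = {sscale c s | c. True}"

definition nil1_subalg :: "'a::field \<Rightarrow> 'a salg set \<Rightarrow> bool" where
  "nil1_subalg \<delta> W \<longleftrightarrow> (\<exists>s. s \<noteq> (0, 0, 0) \<and> W = line s) \<and>
     (\<forall>x\<in>W. \<forall>y\<in>W. smul \<delta> x y \<in> W) \<and>
     (\<forall>x\<in>W. \<forall>y\<in>W. smul \<delta> x y = (0, 0, 0))"

definition is_basis3 :: "'a::field salg \<Rightarrow> 'a salg \<Rightarrow> 'a salg \<Rightarrow> bool" where
  "is_basis3 x y z \<longleftrightarrow>
     (\<forall>a b c. sadd (sscale a x) (sadd (sscale b y) (sscale c z)) = (0, 0, 0)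
        \<longrightarrow> a = 0 \<and> b = 0 \<and> c = 0) \<and>
     (\<forall>w. \<exists>a b c. w = sadd (sscale a x) (sadd (sscale b y) (sscale c z)))"

definition idempotents :: "'a::field \<Rightarrow> 'a salg set" where
  "idempotents \<delta> = {e. smul \<delta> e e = e}"

end

theory Submission
  imports Defs
begin

lemma smul_scale: "smul \<delta> (sscale c s) (sscale d s) = sscale (c*d) (smul \<delta> s s)"
  by (cases s) (auto simp: smul_def sscale_def Bf_def algebra_simps)

lemma line_mem: "x \<in> line s \<longleftrightarrow> (\<exists>c. x = sscale c s)"
  by (auto simp: line_def)

lemma nil1_iff: "nil1_subalg \<delta> W \<longleftrightarrow> (\<exists>s. s \<noteq> (0,0,0) \<and> W = line s \<and> smul \<delta> s s = (0,0,0))"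
proof
  assume "nil1_subalg \<delta> W"
  then obtain s where s: "s \<noteq> (0,0,0)" "W = line s" and z: "\<forall>x\<in>W. \<forall>y\<in>W. smul \<delta> x y = (0, 0, 0)"
    by (auto simp: nil1_subalg_def)
  have "s \<in> W" using s by (auto simp: line_mem intro!: exI[of _ 1] simp: sscale_def split: prod.splits)
  then show "\<exists>s. s \<noteq> (0,0,0) \<and> W = line s \<and> smul \<delta> s s = (0,0,0)" using s z by blast
next
  assume "\<exists>s. s \<noteq> (0,0,0) \<and> W = line s \<and> smul \<delta> s s = (0,0,0)"
  then obtain s where s: "s \<noteq> (0,0,0)" "W = line s" "smul \<delta> s s = (0,0,0)" by blast
  have "\<forall>x\<in>W. \<forall>y\<in>W. smul \<delta> x y = (0, 0, 0)"
    using s by (auto simp: line_mem smul_scale) (simp add: sscale_def)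
  moreover have "(0,0,0) \<in> W" using s by (auto simp: line_mem intro!: exI[of _ 0] simp: sscale_def split: prod.splits)
  ultimately show "nil1_subalg \<delta> W" using s unfolding nil1_subalg_def by metis
qed

lemma sq_zero_iff:
  fixes al a b :: "'a::field"
  assumes "(2::'a) \<noteq> 0" "(al,a,b) \<noteq> (0,0,0)"
  shows "smul \<delta> (al,a,b) (al,a,b) = (0,0,0) \<longleftrightarrow> al = 0 \<and> a*a + b*b + \<delta>*(a*b+b*a) = 0"
proof
  assume h: "smul \<delta> (al,a,b) (al,a,b) = (0,0,0)"
  hence e: "al*al + (a*a + b*b + \<delta>*(a*b+b*a)) = 0" "al*a + al*a = 0" "al*b+al*b = 0"
    by (auto simp: smul_def Bf_def)
  have "al = 0"
  proof (rule ccontr)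
    assume "al \<noteq> 0"
    then have "a = 0" "b = 0" using e assms(1) by (auto simp flip: mult_2)
    then show False using e \<open>al \<noteq> 0\<close> by simp
  qed
  then show "al = 0 \<and> a*a + b*b + \<delta>*(a*b+b*a) = 0" using e by simp
qed (auto simp: smul_def Bf_def)

lemma line_eq: "k \<noteq> 0 \<Longrightarrow> line (sscale k s) = line s"
  apply (auto simp: line_mem sscale_def split: prod.splits)
  apply (metis mult.assoc)
  by (metis mult.assoc field_class.field_inverse mult_1 mult.commute)

lemma det_line:
  fixes a b c d :: "'a::field"
  assumes "(0::'a,a,b) \<noteq> (0,0,0)" "(0::'a,c,d) \<noteq> (0,0,0)" "a*d = b*c"
  shows "line (0,a,b) = line (0,c,d)"
proof (cases "a = 0")
  case False
  have c0: "c \<noteq> 0" using assms False by auto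
  have "(0,c,d) = sscale (c/a) (0,a,b)" using False assms(3)
    by (auto simp: sscale_def field_simps)
  then show ?thesis using line_eq[of "c/a" "(0,a,b)"] c0 False by simp
next
  case True
  then have b0: "b \<noteq> 0" using assms by auto
  then have "c = 0" using True assms(3) by simp
  then have d0: "d \<noteq> 0" using assms by auto
  have "(0,c,d) = sscale (d/b) (0,a,b)" using True b0 \<open>c = 0\<close>
    by (auto simp: sscale_def field_simps)
  then show ?thesis using line_eq[of "d/b" "(0,a,b)"] d0 b0 by simp
qed

lemma idem_half:
  fixes x y :: "'a::field"
  assumes "x*x + y*y + \<delta>*(x*y+y*x) = 1/4" "(2::'a) \<noteq> 0"
  shows "smul \<delta> (1/2,x,y) (1/2,x,y) = (1/2,x,y)"
proof -
  have four: "(4::'a) \<noteq> 0" using assms(2) by (metis mult_eq_0_iff numeral_Bit0 mult_2)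
  have "(1/2::'a)*(1/2) + 1/4 = 1/2" using assms(2) four by (simp add: field_simps)
  moreover have "(1/2::'a)*z + 1/2*z = z" for z using assms(2) by (simp flip: distrib_right)
  moreover have "smul \<delta> (1/2,x,y) (1/2,x,y) =
     ((1/2::'a)*(1/2) + (x*x + y*y + \<delta>*(x*y+y*x)), 1/2*x+1/2*x, 1/2*y+1/2*y)"
    by (simp add: smul_def Bf_def)
  ultimately show ?thesis using assms(1) by metis
qed

lemma partb:
  fixes a b c d :: "'a::field"
  assumes two: "(2::'a) \<noteq> 0" and D: "a*d - b*c \<noteq> 0"
    and ss: "a*a + b*b + \<delta>*(a*b+b*a) = 0" and tt: "c*c + d*d + \<delta>*(c*d+d*c) = 0"
  shows "is_basis3 (0,a,b) sone (0,c,d) \<and>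
              (frob \<delta> (0,a,b) (0,c,d) = 1 / 4 \<longrightarrow>
                 idempotents \<delta> = {(0, 0, 0), sone} \<union>
                   {sadd (sscale \<xi> (0,a,b)) (sadd (sscale (1 / 2) sone) (sscale (inverse \<xi>) (0,c,d)))
                    | \<xi>. \<xi> \<noteq> 0})"
proof -
  let ?D = "a*d - b*c"
  obtain Dv where Dv: "Dv = a*d - b*c" "Dv \<noteq> 0" using D by blast
  have span: "\<exists>p q. x = p*a + q*c \<and> y = p*b + q*d" for x y :: 'a
  proof (intro exI conjI)
    have "(x*d - y*c)/Dv * a + (a*y - b*x)/Dv * c = ((x*d - y*c) * a + (a*y - b*x) * c)/Dv"
      by (simp add: add_divide_distrib)
    also have "(x*d - y*c) * a + (a*y - b*x) * c = x*Dv" by (simp add: Dv(1) algebra_simps)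
    finally show "x = (x*d - y*c)/Dv * a + (a*y - b*x)/Dv * c" using Dv(2) by simp
    have "(x*d - y*c)/Dv * b + (a*y - b*x)/Dv * d = ((x*d - y*c) * b + (a*y - b*x) * d)/Dv"
      by (simp add: add_divide_distrib)
    also have "(x*d - y*c) * b + (a*y - b*x) * d = y*Dv" by (simp add: Dv(1) algebra_simps)
    finally show "y = (x*d - y*c)/Dv * b + (a*y - b*x)/Dv * d" using Dv(2) by simp
  qed
  have indep: "p = 0 \<and> q = 0" if "p*a + q*c = 0" "p*b + q*d = 0" for p q :: 'a
  proof -
    have "p * ?D = d*(p*a+q*c) - c*(p*b+q*d)" by (simp add: algebra_simps)
    also have "\<dots> = 0" using that by simp
    finally have "p = 0" using D by simp
    have "q * ?D = a*(p*b+q*d) - b*(p*a+q*c)" by (simp add: algebra_simps)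
    also have "\<dots> = 0" using that by simp
    finally have "q = 0" using D by simp
    with \<open>p = 0\<close> show ?thesis by simp
  qed
  have basis: "is_basis3 (0,a,b) sone (0,c,d)"
    unfolding is_basis3_def
  proof (rule conjI; intro allI impI)
    fix p r q :: 'a
    assume "sadd (sscale p (0,a,b)) (sadd (sscale r sone) (sscale q (0,c,d))) = (0,0,0)"
    then have r0: "r = 0" and h1: "p*a + q*c = 0" and h2: "p*b + q*d = 0"
      by (auto simp: sadd_def sscale_def sone_def)
    show "p = 0 \<and> r = 0 \<and> q = 0" using indep[OF h1 h2] r0 by simp
  next
    fix w :: "'a salg"
    obtain w0 x y where w: "w = (w0,x,y)" by (cases w) auto
    obtain p q where pq: "x = p*a + q*c" "y = p*b + q*d" using span by blast
    show "\<exists>p r q. w = sadd (sscale p (0,a,b)) (sadd (sscale r sone) (sscale q (0,c,d)))"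
      by (rule exI[of _ p], rule exI[of _ w0], rule exI[of _ q])
        (simp add: w pq sadd_def sscale_def sone_def)
  qed
  have idem: "idempotents \<delta> = {(0, 0, 0), sone} \<union>
                   {sadd (sscale \<xi> (0,a,b)) (sadd (sscale (1 / 2) sone) (sscale (inverse \<xi>) (0,c,d)))
                    | \<xi>. \<xi> \<noteq> 0}"
    if fr: "frob \<delta> (0,a,b) (0,c,d) = 1 / 4"
  proof -
    have four: "(4::'a) \<noteq> 0" using two by (metis mult_eq_0_iff numeral_Bit0 mult_2)
    have st: "2*(a*c + b*d + \<delta>*(a*d+b*c)) = 1/4"
      using fr by (simp add: frob_def Bf_def)
    show ?thesis
    proof (intro set_eqI iffI)
      fix e assume "e \<in> idempotents \<delta>"
      then obtain al x y where e: "e = (al,x,y)" and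
        h: "al*al + (x*x + y*y + \<delta>*(x*y+y*x)) = al" "al*x + al*x = x" "al*y+al*y = y"
        by (cases e) (auto simp: idempotents_def smul_def Bf_def)
      show "e \<in> {(0, 0, 0), sone} \<union>
                   {sadd (sscale \<xi> (0,a,b)) (sadd (sscale (1 / 2) sone) (sscale (inverse \<xi>) (0,c,d)))
                    | \<xi>. \<xi> \<noteq> 0}"
      proof (cases "x = 0 \<and> y = 0")
        case True
        then have "al*al = al" using h by simp
        then have "al = 0 \<or> al = 1"
          by (metis mult_cancel_right1 mult_zero_right mult.commute)
        then show ?thesis using True e by (auto simp: sone_def)
      next
        case False
        then have "(2*al - 1) * x = 0 \<and> (2*al - 1) * y = 0" using h by (simp add: algebra_simps)
        then have "2*al - 1 = 0" using False by auto
        then have al: "al = 1/2" using two by (simp add: field_simps)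
        obtain p q where pq: "x = p*a + q*c" "y = p*b + q*d" using span by blast
        have "x*x + y*y + \<delta>*(x*y+y*x) =
            p*p*(a*a + b*b + \<delta>*(a*b+b*a)) + q*q*(c*c + d*d + \<delta>*(c*d+d*c))
             + 2*p*q*(a*c + b*d + \<delta>*(a*d+b*c))"
          unfolding pq by (simp add: algebra_simps)
        also have "\<dots> = p*q*(2*(a*c + b*d + \<delta>*(a*d+b*c)))" using ss tt by (simp add: algebra_simps)
        also have "\<dots> = p*q*(1/4)" by (simp only: st)
        finally have X: "x*x + y*y + \<delta>*(x*y+y*x) = p*q*(1/4)" .
        have A: "1/2*(1/2) + p*q*(1/4) = (1/2::'a)" using h(1) by (simp only: al X)
        have B: "(1/2::'a)*(1/2) = 1/4" using two four by (simp add: field_simps)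
        have C: "(1/2::'a) = 1/4 + 1/4" using two four by (simp add: field_simps)
        have "1/4 + p*q*(1/4) = 1/4 + 1*(1/4)" using A unfolding B by (simp only: C mult_1_left)
        then have "p*q*(1/4) = 1*(1/4)" by (rule add_left_imp_eq)
        then have pq1: "p*q = 1" using four by simp
        then have "p \<noteq> 0" by auto
        then have "q = inverse p" using pq1 by (metis inverse_unique)
        then have "e = sadd (sscale p (0,a,b)) (sadd (sscale (1 / 2) sone) (sscale (inverse p) (0,c,d)))"
          using e al pq by (simp add: sadd_def sscale_def sone_def)
        then show ?thesis using \<open>p \<noteq> 0\<close> by blast
      qed
    next
      fix e assume "e \<in> {(0, 0, 0), sone} \<union>
                   {sadd (sscale \<xi> (0,a,b)) (sadd (sscale (1 / 2) sone) (sscale (inverse \<xi>) (0,c,d)))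
                    | \<xi>. \<xi> \<noteq> 0}"
      then consider "e = (0,0,0)" | "e = sone" |
        p where "p \<noteq> 0" "e = (1/2, p*a + inverse p * c, p*b + inverse p * d)"
        by (auto simp: sadd_def sscale_def sone_def)
      then show "e \<in> idempotents \<delta>"
      proof cases
        case 1 then show ?thesis by (simp add: idempotents_def smul_def Bf_def)
      next
        case 2 then show ?thesis by (simp add: idempotents_def smul_def Bf_def sone_def)
      next
        case 3
        let ?x = "p*a + inverse p * c" and ?y = "p*b + inverse p * d"
        have "?x*?x + ?y*?y + \<delta>*(?x*?y+?y*?x) =
            p*p*(a*a + b*b + \<delta>*(a*b+b*a)) + inverse p*inverse p*(c*c + d*d + \<delta>*(c*d+d*c))
             + 2*p*inverse p*(a*c + b*d + \<delta>*(a*d+b*c))"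
          by (simp add: algebra_simps)
        also have "\<dots> = (p*inverse p)*(2*(a*c + b*d + \<delta>*(a*d+b*c)))" using ss tt by (simp add: algebra_simps)
        also have "\<dots> = 1/4" by (simp only: st) (simp add: 3(1))
        finally have B: "?x*?x + ?y*?y + \<delta>*(?x*?y+?y*?x) = 1/4" .
        show ?thesis using 3(2) idem_half[OF B two] by (simp add: idempotents_def)
      qed
    qed
  qed
  show ?thesis using basis idem by blast
qed

lemma nil_line:
  assumes "nil1_subalg \<delta> (line s)"
  shows "smul \<delta> s s = (0,0,0)"
proof -
  obtain s' where s': "s' \<noteq> (0,0,0)" "line s = line s'" "smul \<delta> s' s' = (0,0,0)"
    using assms nil1_iff by metis
  have "s \<in> line s" by (cases s) (auto simp: line_mem sscale_def intro!: exI[of _ 1])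
  then obtain c where "s = sscale c s'" using s' by (auto simp: line_mem)
  then have "smul \<delta> s s = sscale (c*c) (smul \<delta> s' s')" by (simp only: smul_scale)
  then show ?thesis using s' by (simp add: sscale_def)
qed

lemma nil_triple:
  fixes s :: "'a::field salg"
  assumes two: "(2::'a) \<noteq> 0" and "s \<noteq> (0,0,0)" "nil1_subalg \<delta> (line s)"
  shows "\<exists>a b. s = (0,a,b) \<and> a*a + b*b + \<delta>*(a*b+b*a) = 0"
proof -
  obtain al a b where s: "s = (al,a,b)" by (cases s) auto
  have "smul \<delta> s s = (0,0,0)" using nil_line assms(3) by blast
  then show ?thesis using sq_zero_iff[OF two, of al a b] assms(2) s by auto
qed

theorem lemma3p5:
  fixes \<delta> :: "'a::field"
  assumes char: "(2::'a) \<noteq> 0"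
    and d1: "\<delta> \<noteq> 1" and d2: "\<delta> \<noteq> -1"
    and roots: "\<exists>\<zeta>::'a. \<zeta>\<^sup>2 - 2 * \<delta> * \<zeta> + 1 = 0"
  shows "(\<exists>s t. s \<noteq> (0, 0, 0) \<and> t \<noteq> (0, 0, 0) \<and> line s \<noteq> line t \<and>
            {W. nil1_subalg \<delta> W} = {line s, line t} \<and> line s \<subseteq> Vsp \<and> line t \<subseteq> Vsp)
       \<and> (\<forall>s t. s \<noteq> (0, 0, 0) \<and> t \<noteq> (0, 0, 0) \<and> line s \<noteq> line t \<and>
            nil1_subalg \<delta> (line s) \<and> nil1_subalg \<delta> (line t) \<longrightarrow>
              is_basis3 s sone t \<and>
              (frob \<delta> s t = 1 / 4 \<longrightarrow>
                 idempotents \<delta> = {(0, 0, 0), sone} \<union>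
                   {sadd (sscale \<xi> s) (sadd (sscale (1 / 2) sone) (sscale (inverse \<xi>) t))
                    | \<xi>. \<xi> \<noteq> 0}))"
proof (rule conjI)
  show "\<forall>s t. s \<noteq> (0, 0, 0) \<and> t \<noteq> (0, 0, 0) \<and> line s \<noteq> line t \<and>
            nil1_subalg \<delta> (line s) \<and> nil1_subalg \<delta> (line t) \<longrightarrow>
              is_basis3 s sone t \<and>
              (frob \<delta> s t = 1 / 4 \<longrightarrow>
                 idempotents \<delta> = {(0, 0, 0), sone} \<union>
                   {sadd (sscale \<xi> s) (sadd (sscale (1 / 2) sone) (sscale (inverse \<xi>) t))
                    | \<xi>. \<xi> \<noteq> 0})"
  proof (intro allI impI)
    fix s t :: "'a salg"
    assume h: "s \<noteq> (0, 0, 0) \<and> t \<noteq> (0, 0, 0) \<and> line s \<noteq> line t \<and>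
            nil1_subalg \<delta> (line s) \<and> nil1_subalg \<delta> (line t)"
    obtain a b where s: "s = (0,a,b)" "a*a + b*b + \<delta>*(a*b+b*a) = 0"
      using nil_triple[OF char] h by blast
    obtain c d where t: "t = (0,c,d)" "c*c + d*d + \<delta>*(c*d+d*c) = 0"
      using nil_triple[OF char] h by blast
    have "a*d - b*c \<noteq> 0"
    proof
      assume "a*d - b*c = 0"
      then have "line s = line t" using det_line[of a b c d] h s t by simp
      then show False using h by blast
    qed
    from partb[OF char this s(2) t(2)] show "is_basis3 s sone t \<and>
              (frob \<delta> s t = 1 / 4 \<longrightarrow>
                 idempotents \<delta> = {(0, 0, 0), sone} \<union>
                   {sadd (sscale \<xi> s) (sadd (sscale (1 / 2) sone) (sscale (inverse \<xi>) t))
                    | \<xi>. \<xi> \<noteq> 0})" using s t by simp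
  qed
next
  obtain \<zeta> :: 'a where z: "\<zeta>\<^sup>2 - 2 * \<delta> * \<zeta> + 1 = 0" using roots by blast
  have z0: "\<zeta> \<noteq> 0" using z by auto
  define \<eta> where "\<eta> = inverse \<zeta>"
  have zh: "\<zeta> * \<eta> = 1" using z0 by (simp add: \<eta>_def)
  have zsum: "\<zeta> + \<eta> = 2*\<delta>"
  proof -
    have "(\<zeta> + \<eta>) * \<zeta> = \<zeta>\<^sup>2 + 1" using zh by (simp add: power2_eq_square algebra_simps)
    also have "\<dots> = 2*\<delta>*\<zeta>" using z by (simp add: algebra_simps)
    finally show ?thesis using z0 by simp
  qed
  have zne: "\<zeta> \<noteq> \<eta>"
  proof
    assume e: "\<zeta> = \<eta>"
    then have "2*\<zeta> = \<zeta> + \<eta>" by (simp only: mult_2)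
    then have "2*\<zeta> = 2*\<delta>" using zsum by (rule trans)
    then have "\<zeta> = \<delta>" using char by simp
    then have "\<zeta> * \<zeta> = 1" using zh e by simp
    then have "(\<zeta> - 1) * (\<zeta> + 1) = 0" by (simp add: ring_distribs)
    then have "\<zeta> = 1 \<or> \<zeta> = -1" by (auto simp: eq_neg_iff_add_eq_0)
    then show False using \<open>\<zeta> = \<delta>\<close> d1 d2 by auto
  qed
  define s :: "'a salg" where "s = (0, -\<zeta>, 1)"
  define t :: "'a salg" where "t = (0, -\<eta>, 1)"
  have quad: "k*k + 1*1 + \<delta>*(k*1+1*k) = 0 \<longleftrightarrow> k = -\<zeta> \<or> k = -\<eta>" for k
  proof -
    have "(k + \<zeta>) * (k + \<eta>) = k*k + (\<zeta> + \<eta>)*k + \<zeta>*\<eta>" by (simp add: algebra_simps)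
    also have "\<dots> = k*k + (2*\<delta>)*k + 1" by (simp only: zsum zh)
    also have "\<dots> = k*k + 1*1 + \<delta>*(k*1+1*k)" by (simp add: algebra_simps mult_2)
    finally have F: "(k + \<zeta>) * (k + \<eta>) = k*k + 1*1 + \<delta>*(k*1+1*k)" .
    show ?thesis unfolding F[symmetric] by (simp add: eq_neg_iff_add_eq_0)
  qed
  have qs: "(-\<zeta>)*(-\<zeta>) + 1*1 + \<delta>*((-\<zeta>)*1+1*(-\<zeta>)) = 0" using quad by blast
  have qt: "(-\<eta>)*(-\<eta>) + 1*1 + \<delta>*((-\<eta>)*1+1*(-\<eta>)) = 0" using quad by blast
  have nils: "nil1_subalg \<delta> (line s)"
    unfolding nil1_iff
  proof (rule exI[of _ s], intro conjI)
    show "s \<noteq> (0,0,0)" by (simp add: s_def)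
    show "smul \<delta> s s = (0,0,0)" unfolding s_def
      using sq_zero_iff[OF char, of 0 "-\<zeta>" 1 \<delta>] qs by simp
  qed simp
  have nilt: "nil1_subalg \<delta> (line t)"
    unfolding nil1_iff
  proof (rule exI[of _ t], intro conjI)
    show "t \<noteq> (0,0,0)" by (simp add: t_def)
    show "smul \<delta> t t = (0,0,0)" unfolding t_def
      using sq_zero_iff[OF char, of 0 "-\<eta>" 1 \<delta>] qt by simp
  qed simp
  have lne: "line s \<noteq> line t"
  proof
    assume "line s = line t"
    moreover have "t \<in> line t" by (auto simp: t_def line_mem sscale_def intro!: exI[of _ 1])
    ultimately have "t \<in> line s" by simp
    then obtain c where "t = sscale c s" unfolding line_mem by blast
    then have "c = 1" "\<eta> = c * \<zeta>" by (auto simp: s_def t_def sscale_def)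
    then show False using zne by simp
  qed
  have all: "{W. nil1_subalg \<delta> W} = {line s, line t}"
  proof (intro set_eqI iffI)
    fix W assume "W \<in> {W. nil1_subalg \<delta> W}"
    then obtain r where r: "r \<noteq> (0,0,0)" "W = line r" "smul \<delta> r r = (0,0,0)"
      using nil1_iff by blast
    obtain al a b where rr: "r = (al,a,b)" by (cases r) auto
    have al: "al = 0" and q: "a*a + b*b + \<delta>*(a*b+b*a) = 0"
      using sq_zero_iff[OF char, of al a b] r rr by auto
    have b0: "b \<noteq> 0"
    proof
      assume "b = 0" then have "a = 0" using q by simp
      then show False using r rr al \<open>b = 0\<close> by simp
    qed
    define k where "k = a / b"
    have ak: "a = k * b" using b0 by (simp add: k_def)
    have "b*b*(k*k + 1*1 + \<delta>*(k*1+1*k)) = 0" using q unfolding ak by (simp add: algebra_simps)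
    then have "k = -\<zeta> \<or> k = -\<eta>" using b0 quad by simp
    then have "r = sscale b s \<or> r = sscale b t" using rr al ak by (auto simp: s_def t_def sscale_def)
    then have "line r = line s \<or> line r = line t" using line_eq[OF b0, of s] line_eq[OF b0, of t] by metis
    then show "W \<in> {line s, line t}" using r(2) by simp
  next
    fix W assume "W \<in> {line s, line t}"
    then show "W \<in> {W. nil1_subalg \<delta> W}" using nils nilt by auto
  qed
  have V: "line r \<subseteq> Vsp" if "fst r = 0" for r :: "'a salg"
    using that by (cases r) (auto simp: line_mem Vsp_def sscale_def)
  have Vs: "line s \<subseteq> Vsp" by (rule V) (simp add: s_def)
  have Vt: "line t \<subseteq> Vsp" by (rule V) (simp add: t_def)
  show "\<exists>s t. s \<noteq> (0, 0, 0) \<and> t \<noteq> (0, 0, 0) \<and> line s \<noteq> line t \<and>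
            {W. nil1_subalg \<delta> W} = {line s, line t} \<and> line s \<subseteq> Vsp \<and> line t \<subseteq> Vsp"
    by (rule exI[of _ s], rule exI[of _ t])
      (simp add: lne all Vs Vt, simp add: s_def t_def)
qed

end
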